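(* Let $k$ be an infinite field, let $\Gamma$ be a finite simplicial complex of dimension $d-1$, and let $S_1,\ldots,S_d$ be subsets of the vertex set of $\Gamma$. Then there is an l.s.o.p. $\theta_1,\ldots,\theta_d$ for the face ring $k[\Gamma]$ with $\mathrm{supp}(\theta_i)=S_i$ for $1\le i\le d$ if and only if, for every face $F\in\Gamma$, $|\{i: S_i\cap F\ne\emptyset\}|\ge|F|$.
   Context: $k[\Gamma]$ is the face ring: the polynomial ring in variables $x_w$ indexed by the vertices of $\Gamma$ modulo the monomials $x^F=\prod_{w\in F}x_w$ for non-faces $F$, graded by degree. The support of a degree-one element $\theta=\sum a_wx_w$ is $\{w:a_w\ne0\}$. An l.s.o.p. for $k[\Gamma]$ (Krull dimension $d$) is a sequence of $d$ degree-one elements $\theta_1,\ldots,\theta_d$ such that $k[\Gamma]/(\theta_1,\ldots,\theta_d)$ is finite-dimensional over $k$. *)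

theory Defs
  imports "HOL-Library.Poly_Mapping"
begin

type_synonym ('v, 'k) mpoly = "('v \<Rightarrow>\<^sub>0 nat) \<Rightarrow>\<^sub>0 'k"

definition simplicial_complex :: "'v set set \<Rightarrow> bool" where
  "simplicial_complex \<Gamma> \<longleftrightarrow> finite \<Gamma> \<and> \<Gamma> \<noteq> {} \<and> (\<forall>F\<in>\<Gamma>. finite F) \<and>
     (\<forall>F\<in>\<Gamma>. \<forall>G. G \<subseteq> F \<longrightarrow> G \<in> \<Gamma>)"

definition vertices :: "'v set set \<Rightarrow> 'v set" where
  "vertices \<Gamma> = \<Union>\<Gamma>"

(* dim \<Gamma> = d - 1 means the maximal face cardinality is d. *)
definition face_card_max :: "'v set set \<Rightarrow> nat" where
  "face_card_max \<Gamma> = Max (card ` \<Gamma>)"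

definition poly_ring :: "'v set \<Rightarrow> ('v, 'k::comm_ring_1) mpoly set" where
  "poly_ring V = {p :: ('v, 'k) mpoly. \<forall>m\<in>Poly_Mapping.keys p. Poly_Mapping.keys m \<subseteq> V}"

definition ideal_gen :: "('v, 'k::comm_ring_1) mpoly set \<Rightarrow> ('v, 'k) mpoly set \<Rightarrow> ('v, 'k) mpoly set" where
  "ideal_gen R G = {\<Sum>g\<in>A. q g * g | A q. finite A \<and> A \<subseteq> G \<and> (\<forall>g\<in>A. q g \<in> R)}"

definition var :: "'v \<Rightarrow> ('v, 'k::comm_ring_1) mpoly" where
  "var w = Poly_Mapping.single (Poly_Mapping.single w 1) 1"

definition const :: "'k::comm_ring_1 \<Rightarrow> ('v, 'k) mpoly" where
  "const c = Poly_Mapping.single 0 c"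

definition monom_set :: "'v set \<Rightarrow> ('v, 'k::comm_ring_1) mpoly" where
  "monom_set F = (\<Prod>w\<in>F. var w)"

definition SR_ideal :: "'v set set \<Rightarrow> ('v, 'k::comm_ring_1) mpoly set" where
  "SR_ideal \<Gamma> = ideal_gen (poly_ring (vertices \<Gamma>))
      {monom_set F | F. F \<subseteq> vertices \<Gamma> \<and> F \<notin> \<Gamma>}"

definition lin_form :: "'v set \<Rightarrow> ('v \<Rightarrow> 'k::comm_ring_1) \<Rightarrow> ('v, 'k) mpoly" where
  "lin_form V a = (\<Sum>w\<in>V. const (a w) * var w)"

definition supp :: "'v set \<Rightarrow> ('v \<Rightarrow> 'k::comm_ring_1) \<Rightarrow> 'v set" where
  "supp V a = {w\<in>V. a w \<noteq> 0}"

(* R / J is finite-dimensional over k: finitely many elements of R span R modulo J. *)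
definition fin_dim_quot :: "('v, 'k::comm_ring_1) mpoly set \<Rightarrow> ('v, 'k) mpoly set \<Rightarrow> bool" where
  "fin_dim_quot R J \<longleftrightarrow> (\<exists>B. finite B \<and> B \<subseteq> R \<and>
      (\<forall>p\<in>R. \<exists>c. p - (\<Sum>b\<in>B. const (c b) * b) \<in> J))"

(* \<theta>_0,...,\<theta>_{d-1} (given by coefficient vectors a i) form an l.s.o.p. for k[\<Gamma>]:
  k[x_V] / (I_\<Gamma> + (\<theta>_i)) is finite dimensional. *)
definition is_lsop :: "'v set set \<Rightarrow> nat \<Rightarrow> (nat \<Rightarrow> 'v \<Rightarrow> 'k::comm_ring_1) \<Rightarrow> bool" where
  "is_lsop \<Gamma> d a \<longleftrightarrow>
     fin_dim_quot (poly_ring (vertices \<Gamma>))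
       (ideal_gen (poly_ring (vertices \<Gamma>))
          ({monom_set F | F. F \<subseteq> vertices \<Gamma> \<and> F \<notin> \<Gamma>} \<union>
           {lin_form (vertices \<Gamma>) (a i) | i. i < d}))"

end

theory Submission
  imports Defs "Jordan_Normal_Form.Determinant"
begin

lemma hall_aux:
  fixes T :: "'a \<Rightarrow> 'b set"
  shows "finite G \<Longrightarrow> (\<forall>u\<in>G. finite (T u)) \<Longrightarrow> (\<forall>H\<subseteq>G. card H \<le> card (\<Union> (T ` H)))
    \<Longrightarrow> \<exists>f. inj_on f G \<and> (\<forall>u\<in>G. f u \<in> T u)"
proof (induction "card G" arbitrary: G T rule: less_induct)
  case less
  note fin = less.prems(1) and finT = less.prems(2) and hc = less.prems(3)
  show ?case
  proof (cases "G = {}")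
    case True then show ?thesis by auto
  next
    case False
    show ?thesis
    proof (cases "\<forall>H. H \<noteq> {} \<and> H \<subset> G \<longrightarrow> card H < card (\<Union> (T ` H))")
      case True
      obtain u where u: "u \<in> G" using False by auto
      have "card {u} \<le> card (T u)" using hc[rule_format, of "{u}"] u by auto
      then have "T u \<noteq> {}" using finT u by auto
      then obtain i where i: "i \<in> T u" by auto
      define G' where "G' = G - {u}"
      define T' where "T' = (\<lambda>x. T x - {i})"
      have cG': "card G' < card G" unfolding G'_def by (rule card_Diff1_less[OF fin u])
      have "\<forall>H\<subseteq>G'. card H \<le> card (\<Union> (T' ` H))"
      proof (intro allI impI)
        fix H assume H: "H \<subseteq> G'"
        show "card H \<le> card (\<Union> (T' ` H))"
        proof (cases "H = {}")
          case True then show ?thesis by simp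
        next
          case False
          have "H \<subset> G" using H u unfolding G'_def by auto
          then have lt: "card H < card (\<Union> (T ` H))" using True False by auto
          have fu: "finite (\<Union> (T ` H))" using finT \<open>H \<subset> G\<close> fin
            by (meson finite_UN_I finite_subset psubset_imp_subset subsetD)
          have eq: "\<Union> (T' ` H) = \<Union> (T ` H) - {i}" unfolding T'_def by auto
          have "card (\<Union> (T ` H)) - 1 \<le> card (\<Union> (T' ` H))"
            unfolding eq by (metis card_Diff1_le card_Diff_singleton_if diff_le_self fu order.refl)
          then show ?thesis using lt by linarith
        qed
      qed
      moreover have "finite G'" using fin unfolding G'_def by auto
      moreover have "\<forall>x\<in>G'. finite (T' x)" using finT unfolding G'_def T'_def by auto
      ultimately have "\<exists>f. inj_on f G' \<and> (\<forall>x\<in>G'. f x \<in> T' x)"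
        using less.hyps[OF cG'] by simp
      then obtain f where f: "inj_on f G'" "\<forall>x\<in>G'. f x \<in> T' x" by blast
      define g where "g = f(u := i)"
      have "inj_on g G"
        unfolding g_def inj_on_def
      proof (intro ballI impI)
        fix x y assume "x \<in> G" "y \<in> G" "(f(u := i)) x = (f(u := i)) y"
        note h = this
        have fx: "z \<in> G' \<Longrightarrow> f z \<noteq> i" for z using f(2) unfolding T'_def by auto
        show "x = y"
        proof (cases "x = u"; cases "y = u")
          assume "x \<noteq> u" "y \<noteq> u"
          then have "x \<in> G'" "y \<in> G'" using h unfolding G'_def by auto
          then show ?thesis using h f(1) \<open>x \<noteq> u\<close> \<open>y \<noteq> u\<close> unfolding inj_on_def by auto
        next
          assume "x = u" "y \<noteq> u"
          then have "y \<in> G'" using h unfolding G'_def by auto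
          then show ?thesis using h fx \<open>x = u\<close> \<open>y \<noteq> u\<close> by auto
        next
          assume "x \<noteq> u" "y = u"
          then have "x \<in> G'" using h unfolding G'_def by auto
          then show ?thesis using h fx \<open>y = u\<close> \<open>x \<noteq> u\<close> by auto
        qed auto
      qed
      moreover have "\<forall>x\<in>G. g x \<in> T x" using f i unfolding g_def G'_def T'_def by auto
      ultimately show ?thesis by blast
    next
      case False
      then have "\<exists>H. H \<noteq> {} \<and> H \<subset> G \<and> card (\<Union> (T ` H)) \<le> card H" by (meson not_less)
      then obtain H where H: "H \<noteq> {}" "H \<subset> G" "card (\<Union> (T ` H)) \<le> card H" by blast
      define N where "N = \<Union> (T ` H)"
      have finH: "finite H" using H fin by (meson finite_subset psubset_imp_subset)
      have finN: "finite N" unfolding N_def using finH finT H by auto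
      have "card H \<le> card N" using H(2) hc unfolding N_def by (simp add: psubset_imp_subset)
      then have cardN: "card N = card H" using H(3) unfolding N_def by simp
      have cH: "card H < card G" using H fin by (simp add: psubset_card_mono)
      have "\<forall>K\<subseteq>H. card K \<le> card (\<Union> (T ` K))" using hc H by auto
      moreover have "\<forall>x\<in>H. finite (T x)" using finT H by auto
      ultimately have "\<exists>f. inj_on f H \<and> (\<forall>x\<in>H. f x \<in> T x)"
        using less.hyps[OF cH finH] by simp
      then obtain f1 where f1: "inj_on f1 H" "\<forall>x\<in>H. f1 x \<in> T x" by blast
      define G2 where "G2 = G - H"
      define T2 where "T2 = (\<lambda>x. T x - N)"
      have cH0: "card H > 0" using H finH by (simp add: card_gt_0_iff)
      have "card G2 = card G - card H" unfolding G2_def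
        using H(2) finH by (simp add: card_Diff_subset psubset_imp_subset)
      then have cG2: "card G2 < card G" using cH0 cH by linarith
      have "\<forall>K\<subseteq>G2. card K \<le> card (\<Union> (T2 ` K))"
      proof (intro allI impI)
        fix K assume K: "K \<subseteq> G2"
        have KH: "K \<union> H \<subseteq> G" using K H unfolding G2_def by auto
        have finKH: "finite (K \<union> H)" using KH fin finite_subset by blast
        have finU: "finite (\<Union> (T ` (K \<union> H)))" using finKH finT KH by auto
        have NU: "N \<subseteq> \<Union> (T ` (K \<union> H))" unfolding N_def by auto
        have eq: "\<Union> (T2 ` K) = \<Union> (T ` (K \<union> H)) - N" unfolding T2_def N_def by auto
        have "card (\<Union> (T2 ` K)) = card (\<Union> (T ` (K \<union> H))) - card N"
          unfolding eq using NU finN by (simp add: card_Diff_subset)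
        moreover have "card (K \<union> H) \<le> card (\<Union> (T ` (K \<union> H)))" using hc KH by (metis (no_types, lifting))
        moreover have "card (K \<union> H) = card K + card H"
          using K finKH unfolding G2_def by (subst card_Un_disjoint) auto
        ultimately show "card K \<le> card (\<Union> (T2 ` K))" using cardN by linarith
      qed
      moreover have "finite G2" using fin unfolding G2_def by auto
      moreover have "\<forall>x\<in>G2. finite (T2 x)" using finT unfolding G2_def T2_def by auto
      ultimately have "\<exists>f. inj_on f G2 \<and> (\<forall>x\<in>G2. f x \<in> T2 x)"
        using less.hyps[OF cG2] by simp
      then obtain f2 where f2: "inj_on f2 G2" "\<forall>x\<in>G2. f2 x \<in> T2 x" by blast
      define g where "g = (\<lambda>x. if x \<in> H then f1 x else f2 x)"
      have "inj_on g G"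
        unfolding inj_on_def
      proof (intro ballI impI)
        fix x y assume xy: "x \<in> G" "y \<in> G" "g x = g y"
        have inN: "\<And>z. z \<in> H \<Longrightarrow> f1 z \<in> N" using f1 unfolding N_def by auto
        have notN: "\<And>z. z \<in> G2 \<Longrightarrow> f2 z \<notin> N" using f2 unfolding T2_def by auto
        show "x = y"
        proof (cases "x \<in> H"; cases "y \<in> H")
          assume "x \<in> H" "y \<in> H" then show ?thesis using xy f1 unfolding g_def inj_on_def by auto
        next
          assume "x \<in> H" "y \<notin> H" then show ?thesis using xy inN notN unfolding g_def G2_def by force
        next
          assume "x \<notin> H" "y \<in> H" then show ?thesis using xy inN notN unfolding g_def G2_def by force
        next
          assume "x \<notin> H" "y \<notin> H" then show ?thesis using xy f2 unfolding g_def inj_on_def G2_def by auto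
        qed
      qed
      moreover have "\<forall>x\<in>G. g x \<in> T x" using f1 f2 unfolding g_def G2_def T2_def by auto
      ultimately show ?thesis by blast
    qed
  qed
qed

lemma poly_ringI: "(\<And>m. m \<in> Poly_Mapping.keys p \<Longrightarrow> Poly_Mapping.keys m \<subseteq> V) \<Longrightarrow> p \<in> poly_ring V"
  unfolding poly_ring_def by simp

lemma poly_ringD: "p \<in> poly_ring V \<Longrightarrow> m \<in> Poly_Mapping.keys p \<Longrightarrow> Poly_Mapping.keys m \<subseteq> V"
  unfolding poly_ring_def by simp

lemma poly_ring_add: "p \<in> poly_ring V \<Longrightarrow> q \<in> poly_ring V \<Longrightarrow> p + q \<in> poly_ring V"
proof (rule poly_ringI)
  fix m assume "p \<in> poly_ring V" "q \<in> poly_ring V" "m \<in> Poly_Mapping.keys (p + q)"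
  then show "Poly_Mapping.keys m \<subseteq> V" using keys_add[of p q] poly_ringD[of p V m] poly_ringD[of q V m] by auto
qed

lemma poly_ring_uminus: "p \<in> poly_ring V \<Longrightarrow> - p \<in> poly_ring V"
  unfolding poly_ring_def by (simp add: in_keys_iff)

lemma poly_ring_diff: "p \<in> poly_ring V \<Longrightarrow> q \<in> poly_ring V \<Longrightarrow> p - q \<in> poly_ring V"
proof (rule poly_ringI)
  fix m assume "p \<in> poly_ring V" "q \<in> poly_ring V" "m \<in> Poly_Mapping.keys (p - q)"
  then show "Poly_Mapping.keys m \<subseteq> V" using keys_diff[of p q] poly_ringD[of p V m] poly_ringD[of q V m] by auto
qed

lemma poly_ring_mult: "p \<in> poly_ring V \<Longrightarrow> q \<in> poly_ring V \<Longrightarrow> p * q \<in> poly_ring V"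
proof (rule poly_ringI)
  fix m assume p: "p \<in> poly_ring V" and q: "q \<in> poly_ring V" and m: "m \<in> Poly_Mapping.keys (p * q)"
  then obtain a b where ab: "m = a + b" "a \<in> Poly_Mapping.keys p" "b \<in> Poly_Mapping.keys q"
    using keys_mult[of p q] by auto
  have "Poly_Mapping.keys a \<subseteq> V" "Poly_Mapping.keys b \<subseteq> V" using poly_ringD p q ab by auto
  then show "Poly_Mapping.keys m \<subseteq> V" using ab(1) keys_add[of a b] by auto
qed

lemma poly_ring_single: "Poly_Mapping.keys m \<subseteq> V \<Longrightarrow> Poly_Mapping.single m c \<in> poly_ring V"
  unfolding poly_ring_def by simp

lemma poly_ring_zero: "0 \<in> poly_ring V"
  unfolding poly_ring_def by simp

lemma poly_ring_one: "1 \<in> poly_ring V"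
  unfolding poly_ring_def by simp

lemma poly_ring_const: "const c \<in> poly_ring V"
  unfolding const_def by (rule poly_ring_single) simp

lemma poly_ring_var: "w \<in> V \<Longrightarrow> var w \<in> poly_ring V"
  unfolding var_def by (rule poly_ring_single) simp

lemma poly_ring_sum: "(\<And>x. x \<in> A \<Longrightarrow> f x \<in> poly_ring V) \<Longrightarrow> sum f A \<in> poly_ring V"
  by (induction A rule: infinite_finite_induct) (auto intro: poly_ring_add poly_ring_zero)

lemma poly_ring_prod: "(\<And>x. x \<in> A \<Longrightarrow> f x \<in> poly_ring V) \<Longrightarrow> prod f A \<in> poly_ring V"
  by (induction A rule: infinite_finite_induct) (auto intro: poly_ring_mult poly_ring_one)

lemma poly_ring_power: "p \<in> poly_ring V \<Longrightarrow> p ^ n \<in> poly_ring V"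
  by (induction n) (auto intro: poly_ring_mult poly_ring_one)

lemma ideal_genI: "finite A \<Longrightarrow> A \<subseteq> G \<Longrightarrow> (\<forall>g\<in>A. q g \<in> R) \<Longrightarrow> x = (\<Sum>g\<in>A. q g * g) \<Longrightarrow> x \<in> ideal_gen R G"
  unfolding ideal_gen_def by (rule CollectI, rule exI[of _ A], rule exI[of _ q]) simp

lemma ideal_zero: "0 \<in> ideal_gen (poly_ring V) G"
  unfolding ideal_gen_def by (rule CollectI, rule exI[of _ "{}"]) auto

lemma ideal_gen_in: "g \<in> G \<Longrightarrow> g \<in> ideal_gen (poly_ring V) G"
  unfolding ideal_gen_def
  by (rule CollectI, rule exI[of _ "{g}"], rule exI[of _ "\<lambda>_. 1"]) (auto simp: poly_ring_one)

lemma ideal_add: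
  assumes "x \<in> ideal_gen (poly_ring V) G" "y \<in> ideal_gen (poly_ring V) G"
  shows "x + y \<in> ideal_gen (poly_ring V) G"
proof -
  obtain A q where A: "x = (\<Sum>g\<in>A. q g * g)" "finite A" "A \<subseteq> G" "\<forall>g\<in>A. q g \<in> poly_ring V"
    using assms(1) unfolding ideal_gen_def by blast
  obtain B p where B: "y = (\<Sum>g\<in>B. p g * g)" "finite B" "B \<subseteq> G" "\<forall>g\<in>B. p g \<in> poly_ring V"
    using assms(2) unfolding ideal_gen_def by blast
  define r where "r g = (if g \<in> A then q g else 0) + (if g \<in> B then p g else 0)" for g
  have 1: "(\<Sum>g\<in>A \<union> B. (if g \<in> A then q g else 0) * g) = x"
    unfolding A(1) by (rule sum.mono_neutral_cong_right) (use A B in auto)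
  have 2: "(\<Sum>g\<in>A \<union> B. (if g \<in> B then p g else 0) * g) = y"
    unfolding B(1) by (rule sum.mono_neutral_cong_right) (use A B in auto)
  have "x + y = (\<Sum>g\<in>A \<union> B. r g * g)"
    unfolding r_def distrib_right sum.distrib 1 2 ..
  moreover have "\<forall>g\<in>A \<union> B. r g \<in> poly_ring V"
    unfolding r_def using A B by (auto intro!: poly_ring_add simp: poly_ring_zero)
  ultimately show ?thesis using A B by (intro ideal_genI[of "A \<union> B"]) auto
qed

lemma ideal_mult:
  assumes "r \<in> poly_ring V" "x \<in> ideal_gen (poly_ring V) G"
  shows "r * x \<in> ideal_gen (poly_ring V) G"
proof -
  obtain A q where A: "x = (\<Sum>g\<in>A. q g * g)" "finite A" "A \<subseteq> G" "\<forall>g\<in>A. q g \<in> poly_ring V"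
    using assms(2) unfolding ideal_gen_def by blast
  have "r * x = (\<Sum>g\<in>A. (r * q g) * g)" unfolding A(1) sum_distrib_left by (simp add: mult.assoc)
  moreover have "\<forall>g\<in>A. r * q g \<in> poly_ring V" using A assms(1) by (auto intro: poly_ring_mult)
  ultimately show ?thesis using A by (intro ideal_genI[of A]) auto
qed

lemma ideal_uminus: "x \<in> ideal_gen (poly_ring V) G \<Longrightarrow> - x \<in> ideal_gen (poly_ring V) G"
proof -
  assume x: "x \<in> ideal_gen (poly_ring V) G"
  have "-1 \<in> poly_ring V" using poly_ring_uminus[OF poly_ring_one] .
  from ideal_mult[OF this x] show ?thesis by simp
qed

lemma ideal_diff: "x \<in> ideal_gen (poly_ring V) G \<Longrightarrow> y \<in> ideal_gen (poly_ring V) G \<Longrightarrow> x - y \<in> ideal_gen (poly_ring V) G"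
  using ideal_add[of x V G "- y"] ideal_uminus[of y V G] by simp

lemma ideal_sum: "(\<And>x. x \<in> A \<Longrightarrow> f x \<in> ideal_gen (poly_ring V) G) \<Longrightarrow> sum f A \<in> ideal_gen (poly_ring V) G"
  by (induction A rule: infinite_finite_induct) (auto intro: ideal_add ideal_zero)

lemma var_mult_single: "var w * Poly_Mapping.single m c = Poly_Mapping.single (m + Poly_Mapping.single w 1) c"
  unfolding var_def by (simp add: mult_single add.commute)

lemma const_mult_single: "const a * Poly_Mapping.single m c = Poly_Mapping.single m (a * c)"
  unfolding const_def by (simp add: mult_single)

lemma monom_set_eq: "finite F \<Longrightarrow> monom_set F = Poly_Mapping.single (\<Sum>w\<in>F. Poly_Mapping.single w 1) 1"
  unfolding monom_set_def var_def
  by (induction F rule: finite_induct) (auto simp: mult_single)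

lemma poly_expand: "p = (\<Sum>m\<in>Poly_Mapping.keys p. Poly_Mapping.single m (Poly_Mapping.lookup p m))"
proof (rule poly_mapping_eqI)
  fix k
  show "Poly_Mapping.lookup p k = Poly_Mapping.lookup (\<Sum>m\<in>Poly_Mapping.keys p. Poly_Mapping.single m (Poly_Mapping.lookup p m)) k"
  proof -
    have "(\<Sum>m\<in>Poly_Mapping.keys p. Poly_Mapping.lookup p m when m = k) = (if k \<in> Poly_Mapping.keys p then Poly_Mapping.lookup p k else 0)"
      unfolding when_def by (rule sum.delta) simp
    also have "\<dots> = Poly_Mapping.lookup p k" by (simp add: in_keys_iff)
    finally show ?thesis unfolding lookup_sum lookup_single by simp
  qed
qed

lemma sum_pow2_less: "(\<Sum>x<m. (2::nat) ^ x) < 2 ^ m"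
  by (induction m) auto

lemma sum_pow2_subset_less: "finite A \<Longrightarrow> A \<subseteq> {..<m} \<Longrightarrow> (\<Sum>x\<in>A. (2::nat) ^ x) < 2 ^ m"
  using sum_mono2[of "{..<m}" A "\<lambda>x. (2::nat) ^ x"] sum_pow2_less[of m] by auto

lemma pow2_sum_inj_aux:
  "finite A \<Longrightarrow> finite B \<Longrightarrow> card A + card B = N \<Longrightarrow> (\<Sum>x\<in>A. (2::nat) ^ x) = (\<Sum>x\<in>B. 2 ^ x) \<Longrightarrow> A = B"
proof (induction N arbitrary: A B rule: less_induct)
  case (less N)
  show ?case
  proof (cases "A = {} \<or> B = {}")
    case True
    then show ?thesis using less.prems by (auto simp: sum_eq_0_iff)
  next
    case False
    then have ne: "A \<noteq> {}" "B \<noteq> {}" by auto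
    define a where "a = Max A"
    define b where "b = Max B"
    have aA: "a \<in> A" "\<forall>x\<in>A. x \<le> a" using ne less.prems unfolding a_def by auto
    have bB: "b \<in> B" "\<forall>x\<in>B. x \<le> b" using ne less.prems unfolding b_def by auto
    have ab: "a = b"
    proof (rule ccontr)
      assume "a \<noteq> b"
      then consider "a < b" | "b < a" by linarith
      then show False
      proof cases
        case 1
        have "A \<subseteq> {..<b}" using aA 1 by auto
        then have "(\<Sum>x\<in>A. (2::nat) ^ x) < 2 ^ b" using sum_pow2_subset_less[of A b] less.prems(1) by blast
        moreover have "(2::nat) ^ b \<le> (\<Sum>x\<in>B. 2 ^ x)" using bB less.prems
          by (metis member_le_sum zero_le)
        ultimately show False using less.prems by linarith
      next
        case 2
        have "B \<subseteq> {..<a}" using bB 2 by auto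
        then have "(\<Sum>x\<in>B. (2::nat) ^ x) < 2 ^ a" using sum_pow2_subset_less[of B a] less.prems(2) by blast
        moreover have "(2::nat) ^ a \<le> (\<Sum>x\<in>A. 2 ^ x)" using aA less.prems
          by (metis member_le_sum zero_le)
        ultimately show False using less.prems by linarith
      qed
    qed
    have sA: "(\<Sum>x\<in>A. (2::nat) ^ x) = 2 ^ a + (\<Sum>x\<in>A - {a}. 2 ^ x)"
      using aA less.prems by (simp add: sum.remove)
    have sB: "(\<Sum>x\<in>B. (2::nat) ^ x) = 2 ^ a + (\<Sum>x\<in>B - {a}. 2 ^ x)"
      using bB ab less.prems by (simp add: sum.remove)
    have eqs: "(\<Sum>x\<in>A - {a}. (2::nat) ^ x) = (\<Sum>x\<in>B - {a}. 2 ^ x)" using sA sB less.prems by linarith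
    have cA: "card (A - {a}) = card A - 1" using aA less.prems by simp
    have cB: "card (B - {a}) = card B - 1" using bB ab less.prems by simp
    have "card A > 0" "card B > 0" using aA(1) bB(1) less.prems(1,2) card_gt_0_iff by blast+
    then have lt: "card (A - {a}) + card (B - {a}) < N" using cA cB less.prems(3) by linarith
    have "A - {a} = B - {a}" using less.IH[OF lt, of "A - {a}" "B - {a}"] less.prems eqs by simp
    then show ?thesis using aA bB ab by blast
  qed
qed

lemma pow2_sum_inj: "finite A \<Longrightarrow> finite B \<Longrightarrow> (\<Sum>x\<in>A. (2::nat) ^ x) = (\<Sum>x\<in>B. 2 ^ x) \<Longrightarrow> A = B"
  using pow2_sum_inj_aux by blast

lemma prod_monom_if:
  "finite A \<Longrightarrow> (\<Prod>j\<in>A. if c j then monom (1::'a::comm_semiring_1) (e j) else 0)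
     = (if \<forall>j\<in>A. c j then monom 1 (\<Sum>j\<in>A. e j) else 0)"
  by (induction A rule: finite_induct) (auto simp: mult_monom)

definition agen :: "(nat \<Rightarrow> 'v set) \<Rightarrow> (nat \<times> 'v \<Rightarrow> nat) \<Rightarrow> 'k::field \<Rightarrow> nat \<Rightarrow> 'v \<Rightarrow> 'k" where
  "agen S code x i u = (if u \<in> S i then x ^ (2 ^ code (i, u)) else 0)"

lemma perm_unique:
  fixes f :: "'v \<Rightarrow> nat" and g :: "nat \<Rightarrow> 'v" and code :: "nat \<times> 'v \<Rightarrow> nat"
  assumes code: "inj_on code ({0..<d} \<times> V)"
    and GV: "G \<subseteq> V" and f: "inj_on f G" "\<forall>u\<in>G. f u < d"
    and g: "bij_betw g {0..<n} G"
    and p: "p permutes {0..<n}"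
    and eq: "(\<Sum>j=0..<n. (2::nat) ^ code (f (g j), g (p j))) = (\<Sum>j=0..<n. 2 ^ code (f (g j), g j))"
  shows "p = id"
proof -
  have gG: "\<And>j. j < n \<Longrightarrow> g j \<in> G" using g by (auto simp: bij_betw_def)
  have ginj: "\<And>j j'. j < n \<Longrightarrow> j' < n \<Longrightarrow> g j = g j' \<Longrightarrow> j = j'" using g
    by (auto simp: bij_betw_def inj_on_def)
  have pn: "\<And>j. j < n \<Longrightarrow> p j < n" using p by (auto simp: permutes_in_image)
  have codeq: "\<And>j j' u u'. j < n \<Longrightarrow> j' < n \<Longrightarrow> u \<in> G \<Longrightarrow> u' \<in> G \<Longrightarrow>
      code (f (g j), u) = code (f (g j'), u') \<Longrightarrow> j = j' \<and> u = u'"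
  proof -
    fix j j' u u' assume a: "j < n" "j' < n" "u \<in> G" "u' \<in> G" "code (f (g j), u) = code (f (g j'), u')"
    have "(f (g j), u) \<in> {0..<d} \<times> V" "(f (g j'), u') \<in> {0..<d} \<times> V" using a gG f GV by auto
    then have "f (g j) = f (g j') \<and> u = u'" using code a(5) by (auto simp: inj_on_def)
    then show "j = j' \<and> u = u'" using f(1) gG a ginj by (auto simp: inj_on_def)
  qed
  define cp where "cp j = code (f (g j), g (p j))" for j
  define ci where "ci j = code (f (g j), g j)" for j
  have icp: "inj_on cp {0..<n}" unfolding inj_on_def cp_def
  proof (intro ballI impI)
    fix x y assume "x \<in> {0..<n}" "y \<in> {0..<n}" "code (f (g x), g (p x)) = code (f (g y), g (p y))"
    then show "x = y" using codeq[of x y "g (p x)" "g (p y)"] gG pn by auto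
  qed
  have ici: "inj_on ci {0..<n}" unfolding inj_on_def ci_def
  proof (intro ballI impI)
    fix x y assume "x \<in> {0..<n}" "y \<in> {0..<n}" "code (f (g x), g x) = code (f (g y), g y)"
    then show "x = y" using codeq[of x y "g x" "g y"] gG by auto
  qed
  have "(\<Sum>y\<in>cp ` {0..<n}. (2::nat) ^ y) = (\<Sum>y\<in>ci ` {0..<n}. 2 ^ y)"
    using eq unfolding sum.reindex[OF icp] sum.reindex[OF ici] cp_def ci_def by simp
  then have im: "cp ` {0..<n} = ci ` {0..<n}" by (rule pow2_sum_inj[rotated 2]) auto
  have "\<forall>j. p j = j"
  proof
    fix j show "p j = j"
    proof (cases "j < n")
      case True
      then have "cp j \<in> ci ` {0..<n}" using im by auto
      then obtain j' where j': "j' < n" "cp j = ci j'" by auto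
      then have "j = j' \<and> g (p j) = g j'" using codeq[of j j' "g (p j)" "g j'"] True gG pn
        unfolding cp_def ci_def by auto
      then show ?thesis using ginj pn True j' by auto
    next
      case False
      then show ?thesis using p by (auto simp: permutes_def)
    qed
  qed
  then show ?thesis by auto
qed

lemma face_poly:
  fixes S :: "nat \<Rightarrow> 'v set" and code :: "nat \<times> 'v \<Rightarrow> nat"
  assumes code: "inj_on code ({0..<d} \<times> V)"
    and GV: "G \<subseteq> V" and finG: "finite G"
    and hall: "\<forall>H\<subseteq>G. card H \<le> card {i. i < d \<and> S i \<inter> H \<noteq> {}}"
  shows "\<exists>Q :: 'k::field poly. Q \<noteq> 0 \<and> (\<forall>x. poly Q x \<noteq> 0 \<longrightarrow>
     (\<forall>w\<in>G. \<exists>c. \<forall>u\<in>G. (\<Sum>i<d. c i * agen S code x i u) = (if u = w then 1 else 0)))"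
proof -
  define T where "T u = {i. i < d \<and> u \<in> S i}" for u
  have UT: "\<Union>(T ` H) = {i. i < d \<and> S i \<inter> H \<noteq> {}}" for H unfolding T_def by auto
  have "\<forall>H\<subseteq>G. card H \<le> card (\<Union>(T ` H))" unfolding UT using hall by simp
  moreover have "\<forall>u\<in>G. finite (T u)" unfolding T_def by auto
  ultimately obtain f where f: "inj_on f G" "\<forall>u\<in>G. f u \<in> T u" using hall_aux[OF finG] by blast
  have fd: "\<forall>u\<in>G. f u < d" and fS: "\<forall>u\<in>G. u \<in> S (f u)" using f(2) unfolding T_def by auto
  define n where "n = card G"
  obtain g where g: "bij_betw g {0..<n} G" using ex_bij_betw_nat_finite[OF finG] n_def by auto
  have gG: "\<And>j. j < n \<Longrightarrow> g j \<in> G" using g by (auto simp: bij_betw_def)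
  have ginj: "\<And>j j'. j < n \<Longrightarrow> j' < n \<Longrightarrow> g j = g j' \<Longrightarrow> j = j'" using g
    by (auto simp: bij_betw_def inj_on_def)
  have gsurj: "\<And>u. u \<in> G \<Longrightarrow> \<exists>j<n. g j = u" using g by (auto simp: bij_betw_def image_iff)
  define Am where "Am x = mat n n (\<lambda>(j,l). agen S code x (f (g j)) (g l))" for x :: 'k
  have Amc: "Am x \<in> carrier_mat n n" for x unfolding Am_def by simp
  define Q :: "'k poly" where "Q = (\<Sum>p\<in>{p. p permutes {0..<n}}. smult (signof p)
      (\<Prod>j=0..<n. if g (p j) \<in> S (f (g j)) then monom 1 (2 ^ code (f (g j), g (p j))) else 0))"
  have detQ: "poly Q x = det (Am x)" for x
  proof -
    have "det (Am x) = (\<Sum>p\<in>{p. p permutes {0..<n}}. signof p * (\<Prod>j=0..<n. Am x $$ (j, p j)))"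
      by (rule det_def'[OF Amc])
    also have "\<dots> = poly Q x" unfolding Q_def poly_sum poly_smult poly_prod
    proof (rule sum.cong[OF refl])
      fix p assume "p \<in> {p. p permutes {0..<n}}"
      then have pn: "\<And>j. j < n \<Longrightarrow> p j < n" by (auto simp: permutes_in_image)
      have "(\<Prod>j=0..<n. Am x $$ (j, p j)) = (\<Prod>j=0..<n. poly (if g (p j) \<in> S (f (g j)) then monom 1 (2 ^ code (f (g j), g (p j))) else 0) x)"
        by (rule prod.cong[OF refl]) (simp add: Am_def agen_def poly_monom pn)
      then show "signof p * (\<Prod>j=0..<n. Am x $$ (j, p j)) = signof p * (\<Prod>j=0..<n. poly (if g (p j) \<in> S (f (g j)) then monom 1 (2 ^ code (f (g j), g (p j))) else 0) x)"
        by simp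
    qed
    finally show ?thesis by simp
  qed
  define E0 where "E0 = (\<Sum>j=0..<n. (2::nat) ^ code (f (g j), g j))"
  have "coeff Q E0 = (\<Sum>p\<in>{p. p permutes {0..<n}}. if p = id then signof p else 0)"
    unfolding Q_def coeff_sum coeff_smult
  proof (rule sum.cong[OF refl])
    fix p assume "p \<in> {p. p permutes {0..<n}}"
    then have p: "p permutes {0..<n}" by simp
    have "coeff (\<Prod>j=0..<n. if g (p j) \<in> S (f (g j)) then monom (1::'k) (2 ^ code (f (g j), g (p j))) else 0) E0
      = (if p = id then 1 else 0)"
    proof (cases "p = id")
      case True
      have "\<forall>j\<in>{0..<n}. g j \<in> S (f (g j))" using fS gG by auto
      then show ?thesis unfolding prod_monom_if[OF finite_atLeastLessThan] using True
        by (simp add: E0_def)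
    next
      case False
      have "\<not> ((\<Sum>j=0..<n. (2::nat) ^ code (f (g j), g (p j))) = E0)"
        using perm_unique[OF code GV f(1) fd g p] False unfolding E0_def by blast
      then show ?thesis unfolding prod_monom_if[OF finite_atLeastLessThan] using False
        by simp
    qed
    then show "signof p * coeff (\<Prod>j=0..<n. if g (p j) \<in> S (f (g j)) then monom (1::'k) (2 ^ code (f (g j), g (p j))) else 0) E0
      = (if p = id then signof p else 0)" by simp
  qed
  also have "\<dots> = signof (id :: nat \<Rightarrow> nat)"
    by (subst sum.delta) (auto simp: permutes_id finite_permutations)
  also have "\<dots> = 1" by (simp add: signof_id)
  finally have "coeff Q E0 = 1" .
  then have Q0: "Q \<noteq> 0" by auto
  have "\<forall>x. poly Q x \<noteq> 0 \<longrightarrow>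
     (\<forall>w\<in>G. \<exists>c. \<forall>u\<in>G. (\<Sum>i<d. c i * agen S code x i u) = (if u = w then 1 else 0))"
  proof (intro allI impI ballI)
    fix x w assume px: "poly Q x \<noteq> 0" and w: "w \<in> G"
    have "det (Am x) \<noteq> 0" using px detQ by simp
    from det_non_zero_imp_unit[OF Amc this, of "()"]
    obtain B where BA: "B * Am x = 1\<^sub>m n" and B: "B \<in> carrier_mat n n"
      unfolding Units_def ring_mat_def by auto
    obtain l0 where l0: "l0 < n" "g l0 = w" using gsurj w by blast
    define c where "c i = (\<Sum>j=0..<n. if i = f (g j) then B $$ (l0, j) else 0)" for i
    show "\<exists>c. \<forall>u\<in>G. (\<Sum>i<d. c i * agen S code x i u) = (if u = w then 1 else 0)"
    proof (intro exI[of _ c] ballI)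
      fix u assume u: "u \<in> G"
      obtain l where l: "l < n" "g l = u" using gsurj u by blast
      have "(\<Sum>i<d. c i * agen S code x i u) = (\<Sum>i<d. \<Sum>j=0..<n. if i = f (g j) then B $$ (l0, j) * agen S code x i u else 0)"
        unfolding c_def sum_distrib_right by (intro sum.cong refl) auto
      also have "\<dots> = (\<Sum>j=0..<n. \<Sum>i<d. if i = f (g j) then B $$ (l0, j) * agen S code x i u else 0)"
        by (rule sum.swap)
      also have "\<dots> = (\<Sum>j=0..<n. B $$ (l0, j) * agen S code x (f (g j)) u)"
        using fd gG by (intro sum.cong refl) (simp add: sum.delta')
      also have "\<dots> = (\<Sum>j=0..<n. B $$ (l0, j) * Am x $$ (j, l))"
        using l by (intro sum.cong refl) (simp add: Am_def)
      also have "\<dots> = (B * Am x) $$ (l0, l)"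
      proof -
        have dB: "dim_row B = n" "dim_col B = n" using B by auto
        have dA: "dim_row (Am x) = n" "dim_col (Am x) = n" by (simp_all add: Am_def)
        have "(B * Am x) $$ (l0, l) = row B l0 \<bullet> col (Am x) l" using dB dA l0 l by simp
        also have "\<dots> = (\<Sum>j=0..<n. B $$ (l0, j) * Am x $$ (j, l))"
          unfolding scalar_prod_def using dB dA l0 l by (intro sum.cong) auto
        finally show ?thesis by simp
      qed
      also have "\<dots> = (if l0 = l then 1 else 0)" using BA l0 l by simp
      also have "\<dots> = (if u = w then 1 else 0)" using l l0 ginj by auto
      finally show "(\<Sum>i<d. c i * agen S code x i u) = (if u = w then 1 else 0)" .
    qed
  qed
  then show ?thesis using Q0 by blast
qed

lemma generic_choice:
  fixes S :: "nat \<Rightarrow> 'v set" and \<Gamma> :: "'v set set"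
  assumes inf: "infinite (UNIV :: 'k::field set)" and finV: "finite V" and fin\<Gamma>: "finite \<Gamma>"
    and \<Gamma>V: "\<forall>G\<in>\<Gamma>. G \<subseteq> V"
    and hall: "\<forall>G\<in>\<Gamma>. \<forall>H\<subseteq>G. card H \<le> card {i. i < d \<and> S i \<inter> H \<noteq> {}}"
  shows "\<exists>a :: nat \<Rightarrow> 'v \<Rightarrow> 'k. (\<forall>i u. a i u \<noteq> 0 \<longleftrightarrow> u \<in> S i) \<and>
     (\<forall>G\<in>\<Gamma>. \<forall>w\<in>G. \<exists>c. \<forall>u\<in>G. (\<Sum>i<d. c i * a i u) = (if u = w then 1 else 0))"
proof -
  obtain code :: "nat \<times> 'v \<Rightarrow> nat" and n0 where "code ` ({0..<d} \<times> V) = {i. i < n0}" "inj_on code ({0..<d} \<times> V)"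
    using finite_imp_inj_to_nat_seg[of "{0..<d} \<times> V"] finV by blast
  note code = this(2)
  define P where "P G Q \<longleftrightarrow> Q \<noteq> 0 \<and> (\<forall>x. poly Q x \<noteq> 0 \<longrightarrow>
     (\<forall>w\<in>G. \<exists>c. \<forall>u\<in>G. (\<Sum>i<d. c i * agen S code x i u) = (if u = w then 1 else 0)))" for G and Q :: "'k poly"
  have "\<forall>G\<in>\<Gamma>. \<exists>Q. P G Q"
  proof
    fix G assume G: "G \<in> \<Gamma>"
    then have GV: "G \<subseteq> V" and fG: "finite G" using \<Gamma>V finV finite_subset by (auto, blast)
    have hG: "\<forall>H\<subseteq>G. card H \<le> card {i. i < d \<and> S i \<inter> H \<noteq> {}}" using hall G by auto
    show "\<exists>Q. P G Q" unfolding P_def by (rule face_poly[OF code GV fG hG])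
  qed
  then obtain Qf where "\<forall>G\<in>\<Gamma>. P G (Qf G)" using bchoice by metis
  then have Qf: "\<forall>G\<in>\<Gamma>. Qf G \<noteq> 0 \<and> (\<forall>x. poly (Qf G) x \<noteq> 0 \<longrightarrow>
     (\<forall>w\<in>G. \<exists>c. \<forall>u\<in>G. (\<Sum>i<d. c i * agen S code x i u) = (if u = w then 1 else 0)))"
    unfolding P_def by blast
  define bad where "bad = insert 0 (\<Union>G\<in>\<Gamma>. {x. poly (Qf G) x = 0})"
  have "finite bad" unfolding bad_def using fin\<Gamma> Qf poly_roots_finite by (auto, blast)
  then obtain x :: 'k where x: "x \<notin> bad" using ex_new_if_finite[OF inf] by blast
  have x0: "x \<noteq> 0" using x unfolding bad_def by auto
  have "\<forall>i u. agen S code x i u \<noteq> 0 \<longleftrightarrow> u \<in> S i" unfolding agen_def using x0 by auto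
  moreover have "\<forall>G\<in>\<Gamma>. \<forall>w\<in>G. \<exists>c. \<forall>u\<in>G. (\<Sum>i<d. c i * agen S code x i u) = (if u = w then 1 else 0)"
  proof (intro ballI)
    fix G w assume G: "G \<in> \<Gamma>" and w: "w \<in> G"
    have "poly (Qf G) x \<noteq> 0" using x G unfolding bad_def by auto
    then show "\<exists>c. \<forall>u\<in>G. (\<Sum>i<d. c i * agen S code x i u) = (if u = w then 1 else 0)"
      using Qf G w by blast
  qed
  ultimately show ?thesis by blast
qed

lemma const_mult: "const (x * y) = const x * const y"
  unfolding const_def by (simp add: mult_single)

lemma const_add: "const (x + y) = const x + const y"
  unfolding const_def by (simp add: single_add)

lemma const_zero[simp]: "const 0 = 0"
  unfolding const_def by simp

lemma const_one[simp]: "const 1 = 1"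
  unfolding const_def by simp

lemma const_sum: "const (\<Sum>i\<in>A. f i) = (\<Sum>i\<in>A. const (f i))"
  by (induction A rule: infinite_finite_induct) (auto simp: const_add)

definition mdeg :: "'v set \<Rightarrow> ('v \<Rightarrow>\<^sub>0 nat) \<Rightarrow> nat" where
  "mdeg V m = (\<Sum>w\<in>V. Poly_Mapping.lookup m w)"

lemma lookup_add_single: "Poly_Mapping.lookup (m + Poly_Mapping.single u (1::nat)) w = Poly_Mapping.lookup m w + (if u = w then 1 else 0)"
  by (simp add: lookup_add lookup_single when_def)

lemma keys_add_single: "Poly_Mapping.keys (m + Poly_Mapping.single u (1::nat)) = insert u (Poly_Mapping.keys m)"
  by (auto simp: in_keys_iff lookup_add lookup_single when_def split: if_splits)

lemma mdeg_add_single: "finite V \<Longrightarrow> u \<in> V \<Longrightarrow> mdeg V (m + Poly_Mapping.single u 1) = mdeg V m + 1"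
  unfolding mdeg_def lookup_add_single sum.distrib by (simp add: sum.delta)

lemma lin_comb_in_ideal:
  fixes a :: "nat \<Rightarrow> 'v \<Rightarrow> 'k::field"
  assumes finV: "finite V" and GV: "G \<subseteq> V" and w: "w \<in> G"
    and th: "\<forall>i<d. lin_form V (a i) \<in> ideal_gen (poly_ring V) Gens"
    and c: "\<forall>u\<in>G. (\<Sum>i<d. c i * a i u) = (if u = w then 1 else 0)"
  shows "var w + (\<Sum>u\<in>V-G. const (\<Sum>i<d. c i * a i u) * var u) \<in> ideal_gen (poly_ring V) Gens"
proof -
  have inJ: "(\<Sum>i<d. const (c i) * lin_form V (a i)) \<in> ideal_gen (poly_ring V) Gens"
    using th by (intro ideal_sum ideal_mult poly_ring_const) auto
  have "(\<Sum>i<d. const (c i) * lin_form V (a i)) = (\<Sum>i<d. \<Sum>u\<in>V. const (c i * a i u) * var u)"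
    unfolding lin_form_def sum_distrib_left const_mult by (simp add: mult.assoc)
  also have "\<dots> = (\<Sum>u\<in>V. \<Sum>i<d. const (c i * a i u) * var u)" by (rule sum.swap)
  also have "\<dots> = (\<Sum>u\<in>V. const (\<Sum>i<d. c i * a i u) * var u)"
    unfolding const_sum sum_distrib_right ..
  also have "\<dots> = (\<Sum>u\<in>V-G. const (\<Sum>i<d. c i * a i u) * var u) + (\<Sum>u\<in>G. const (\<Sum>i<d. c i * a i u) * var u)"
    by (rule sum.subset_diff[OF GV finV])
  also have "(\<Sum>u\<in>G. const (\<Sum>i<d. c i * a i u) * var u) = (\<Sum>u\<in>G. if u = w then var u else 0)"
    using c by (intro sum.cong refl) auto
  also have "\<dots> = var w" using w finV GV finite_subset by (subst sum.delta) auto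
  finally show ?thesis using inJ by (simp add: add.commute)
qed

lemma high_monomials:
  fixes Gens :: "('v, 'k::field) mpoly set"
  assumes finV: "finite V"
    and fc: "\<forall>F\<in>\<Gamma>. card F \<le> d"
    and lin: "\<forall>G\<in>\<Gamma>. G \<subseteq> V \<longrightarrow> (\<forall>w\<in>G. \<exists>b. var w + (\<Sum>u\<in>V-G. const (b u) * var u) \<in> ideal_gen (poly_ring V) Gens)"
    and mon: "\<forall>F. F \<subseteq> V \<and> F \<notin> \<Gamma> \<longrightarrow> monom_set F \<in> ideal_gen (poly_ring V) Gens"
  shows "Poly_Mapping.keys m \<subseteq> V \<Longrightarrow> d < mdeg V m \<Longrightarrow> Poly_Mapping.single m (1::'k) \<in> ideal_gen (poly_ring V) Gens"
proof (induction "card V - card (Poly_Mapping.keys m)" arbitrary: m rule: less_induct)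
  case less
  define F where "F = Poly_Mapping.keys m"
  have FV: "F \<subseteq> V" and finF: "finite F" using less.prems finV finite_subset unfolding F_def by auto
  show ?case
  proof (cases "F \<in> \<Gamma>")
    case False
    define ind where "ind = (\<Sum>w\<in>F. Poly_Mapping.single w (1::nat))"
    have lind: "Poly_Mapping.lookup ind w = (if w \<in> F then 1 else 0)" for w
      unfolding ind_def lookup_sum lookup_single when_def using finF by (simp add: sum.delta')
    define m' where "m' = m - ind"
    have lm': "Poly_Mapping.lookup m' w = Poly_Mapping.lookup m w - (if w \<in> F then 1 else 0)" for w
      unfolding m'_def lookup_minus lind ..
    have meq: "m = m' + ind"
    proof (rule poly_mapping_eqI)
      fix w
      show "Poly_Mapping.lookup m w = Poly_Mapping.lookup (m' + ind) w"
        unfolding lookup_add lm' lind using F_def by (auto simp: in_keys_iff)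
    qed
    have "Poly_Mapping.keys m' \<subseteq> V"
    proof
      fix w assume "w \<in> Poly_Mapping.keys m'"
      then have "Poly_Mapping.lookup m w \<noteq> 0" using lm'[of w] by (auto simp: in_keys_iff)
      then show "w \<in> V" using FV F_def by (auto simp: in_keys_iff)
    qed
    then have r: "Poly_Mapping.single m' (1::'k) \<in> poly_ring V" by (rule poly_ring_single)
    have "Poly_Mapping.single m (1::'k) = Poly_Mapping.single m' 1 * monom_set F"
      unfolding monom_set_eq[OF finF] mult_single ind_def[symmetric] using meq by simp
    moreover have "monom_set F \<in> ideal_gen (poly_ring V) Gens" using mon FV False by blast
    ultimately show ?thesis using ideal_mult[OF r] by simp
  next
    case True
    have cF: "card F \<le> d" using fc True by blast
    have md: "mdeg V m = (\<Sum>w\<in>F. Poly_Mapping.lookup m w)"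
      unfolding mdeg_def using FV finV F_def by (intro sum.mono_neutral_right) (auto simp: in_keys_iff)
    obtain w where w: "w \<in> F" "Poly_Mapping.lookup m w \<ge> 2"
    proof (rule ccontr)
      assume "\<not> thesis"
      then have "\<forall>w\<in>F. Poly_Mapping.lookup m w \<le> 1" using that by force
      then have "(\<Sum>w\<in>F. Poly_Mapping.lookup m w) \<le> (\<Sum>w\<in>F. 1)" by (intro sum_mono) auto
      then have "(\<Sum>w\<in>F. Poly_Mapping.lookup m w) \<le> card F" by simp
      then show False using md cF less.prems(2) by linarith
    qed
    define m' where "m' = m - Poly_Mapping.single w 1"
    have lm': "Poly_Mapping.lookup m' u = Poly_Mapping.lookup m u - (if u = w then 1 else 0)" for u
      unfolding m'_def lookup_minus lookup_single when_def by auto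
    have meq: "m = m' + Poly_Mapping.single w 1"
    proof (rule poly_mapping_eqI)
      fix u
      show "Poly_Mapping.lookup m u = Poly_Mapping.lookup (m' + Poly_Mapping.single w 1) u"
        unfolding lookup_add_single lm' using w by auto
    qed
    have km': "Poly_Mapping.keys m' = F"
      unfolding F_def using w by (auto simp: in_keys_iff lm' F_def)
    have wV: "w \<in> V" using w FV by auto
    have mdm': "mdeg V m = mdeg V m' + 1" using meq mdeg_add_single[OF finV wV, of m'] by simp
    obtain b where X: "var w + (\<Sum>u\<in>V-F. const (b u) * var u) \<in> ideal_gen (poly_ring V) Gens"
      using lin True FV w by blast
    have r: "Poly_Mapping.single m' (1::'k) \<in> poly_ring V" using km' FV by (intro poly_ring_single) auto
    have eq: "Poly_Mapping.single m (1::'k) = Poly_Mapping.single m' 1 * (var w + (\<Sum>u\<in>V-F. const (b u) * var u))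
        - (\<Sum>u\<in>V-F. const (b u) * Poly_Mapping.single (m' + Poly_Mapping.single u 1) 1)"
    proof -
      have "Poly_Mapping.single m' (1::'k) * (\<Sum>u\<in>V-F. const (b u) * var u) = (\<Sum>u\<in>V-F. const (b u) * Poly_Mapping.single (m' + Poly_Mapping.single u 1) 1)"
        unfolding sum_distrib_left
      proof (rule sum.cong[OF refl])
        fix u
        have "Poly_Mapping.single m' (1::'k) * (const (b u) * var u) = const (b u) * (var u * Poly_Mapping.single m' 1)"
          by (simp add: ac_simps)
        then show "Poly_Mapping.single m' (1::'k) * (const (b u) * var u) = const (b u) * Poly_Mapping.single (m' + Poly_Mapping.single u 1) 1"
          unfolding var_mult_single .
      qed
      moreover have "Poly_Mapping.single m' (1::'k) * var w = Poly_Mapping.single m 1"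
        using var_mult_single[of w m' "1::'k"] meq by (simp add: mult.commute)
      ultimately show ?thesis by (simp add: distrib_left)
    qed
    have "(\<Sum>u\<in>V-F. const (b u) * Poly_Mapping.single (m' + Poly_Mapping.single u 1) (1::'k)) \<in> ideal_gen (poly_ring V) Gens"
    proof (intro ideal_sum ideal_mult[OF poly_ring_const])
      fix u assume u: "u \<in> V - F"
      have k: "Poly_Mapping.keys (m' + Poly_Mapping.single u 1) = insert u F" using km' keys_add_single by metis
      have "card (insert u F) = card F + 1" using u finF by simp
      moreover have "card (insert u F) \<le> card V" using u FV finV by (intro card_mono) auto
      ultimately have lt: "card V - card (Poly_Mapping.keys (m' + Poly_Mapping.single u 1)) < card V - card (Poly_Mapping.keys m)"
        unfolding k F_def[symmetric] by linarith
      have "Poly_Mapping.keys (m' + Poly_Mapping.single u 1) \<subseteq> V" using k u FV by auto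
      moreover have "d < mdeg V (m' + Poly_Mapping.single u 1)"
        using mdeg_add_single[OF finV, of u m'] u mdm' less.prems(2) by simp
      ultimately show "Poly_Mapping.single (m' + Poly_Mapping.single u 1) (1::'k) \<in> ideal_gen (poly_ring V) Gens"
        using less.hyps[OF lt] by blast
    qed
    then show ?thesis unfolding eq by (intro ideal_diff ideal_mult[OF r] X)
  qed
qed

lemma finite_low:
  assumes finV: "finite V"
  shows "finite {m :: 'v \<Rightarrow>\<^sub>0 nat. Poly_Mapping.keys m \<subseteq> V \<and> mdeg V m \<le> d}"
proof -
  let ?L = "{m :: 'v \<Rightarrow>\<^sub>0 nat. Poly_Mapping.keys m \<subseteq> V \<and> mdeg V m \<le> d}"
  let ?FS = "{f :: 'v \<Rightarrow> nat. \<forall>x. (x \<in> V \<longrightarrow> f x \<in> {0..d}) \<and> (x \<notin> V \<longrightarrow> f x = 0)}"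
  have "Poly_Mapping.lookup ` ?L \<subseteq> ?FS"
  proof
    fix f assume "f \<in> Poly_Mapping.lookup ` ?L"
    then obtain m where m: "f = Poly_Mapping.lookup m" "Poly_Mapping.keys m \<subseteq> V" "mdeg V m \<le> d" by auto
    have "\<forall>x. (x \<in> V \<longrightarrow> f x \<in> {0..d})"
    proof (intro allI impI)
      fix x assume "x \<in> V"
      then have "Poly_Mapping.lookup m x \<le> mdeg V m" unfolding mdeg_def using finV by (intro member_le_sum) auto
      then show "f x \<in> {0..d}" using m by auto
    qed
    moreover have "\<forall>x. x \<notin> V \<longrightarrow> f x = 0" using m by (auto simp: in_keys_iff)
    ultimately show "f \<in> ?FS" by blast
  qed
  moreover have "finite ?FS" using finite_set_of_finite_funs[OF finV, of "{0..d}" 0] by simp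
  ultimately have fin: "finite (Poly_Mapping.lookup ` ?L)" by (rule finite_subset)
  have inj: "inj_on Poly_Mapping.lookup ?L" by (rule inj_onI, rule poly_mapping_eqI) simp
  show ?thesis by (rule finite_imageD[OF fin inj])
qed

lemma single_one_inj: "inj (\<lambda>m. Poly_Mapping.single m (1::'k::zero_neq_one))"
proof
  fix m m' assume "Poly_Mapping.single m (1::'k) = Poly_Mapping.single m' 1"
  then have "Poly_Mapping.keys (Poly_Mapping.single m (1::'k)) = Poly_Mapping.keys (Poly_Mapping.single m' (1::'k))" by simp
  then show "m = m'" by simp
qed

lemma fin_dim_from_high:
  fixes Gens :: "('v, 'k::field) mpoly set"
  assumes finV: "finite V"
    and high: "\<forall>m. Poly_Mapping.keys m \<subseteq> V \<and> d < mdeg V m \<longrightarrow> Poly_Mapping.single m (1::'k) \<in> ideal_gen (poly_ring V) Gens"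
  shows "fin_dim_quot (poly_ring V) (ideal_gen (poly_ring V) Gens)"
proof -
  define Low where "Low = {m :: 'v \<Rightarrow>\<^sub>0 nat. Poly_Mapping.keys m \<subseteq> V \<and> mdeg V m \<le> d}"
  have finL: "finite Low" unfolding Low_def by (rule finite_low[OF finV])
  define sg where "sg m = (Poly_Mapping.single m (1::'k) :: ('v, 'k) mpoly)" for m :: "'v \<Rightarrow>\<^sub>0 nat"
  have injsg: "inj_on sg Low" using single_one_inj unfolding sg_def by (metis inj_on_subset subset_UNIV)
  define B where "B = sg ` Low"
  have "finite B" unfolding B_def using finL by simp
  moreover have "B \<subseteq> poly_ring V" unfolding B_def sg_def Low_def by (auto intro: poly_ring_single)
  moreover have "\<forall>p\<in>poly_ring V. \<exists>c. p - (\<Sum>b\<in>B. const (c b) * b) \<in> ideal_gen (poly_ring V) Gens"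
  proof
    fix p :: "('v, 'k) mpoly" assume p: "p \<in> poly_ring V"
    define c where "c b = Poly_Mapping.lookup p (inv_into Low sg b)" for b
    have "(\<Sum>b\<in>B. const (c b) * b) = (\<Sum>m\<in>Low. const (c (sg m)) * sg m)"
      unfolding B_def sum.reindex[OF injsg] by simp
    also have "\<dots> = (\<Sum>m\<in>Low. Poly_Mapping.single m (Poly_Mapping.lookup p m))"
      by (intro sum.cong refl) (simp add: c_def inv_into_f_f[OF injsg], simp add: sg_def const_mult_single)
    also have "\<dots> = (\<Sum>m\<in>Low \<inter> Poly_Mapping.keys p. Poly_Mapping.single m (Poly_Mapping.lookup p m))"
      using finL by (intro sum.mono_neutral_right) (auto simp: in_keys_iff)
    finally have s1: "(\<Sum>b\<in>B. const (c b) * b) = (\<Sum>m\<in>Poly_Mapping.keys p \<inter> Low. Poly_Mapping.single m (Poly_Mapping.lookup p m))"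
      by (simp add: Int_commute)
    have "p = (\<Sum>m\<in>Poly_Mapping.keys p. Poly_Mapping.single m (Poly_Mapping.lookup p m))" by (rule poly_expand)
    also have "\<dots> = (\<Sum>m\<in>Poly_Mapping.keys p \<inter> Low. Poly_Mapping.single m (Poly_Mapping.lookup p m))
        + (\<Sum>m\<in>Poly_Mapping.keys p - Low. Poly_Mapping.single m (Poly_Mapping.lookup p m))"
      by (rule sum.Int_Diff[OF finite_keys])
    finally have "p - (\<Sum>b\<in>B. const (c b) * b) = (\<Sum>m\<in>Poly_Mapping.keys p - Low. Poly_Mapping.single m (Poly_Mapping.lookup p m))"
      unfolding s1 by (simp add: algebra_simps)
    also have "\<dots> \<in> ideal_gen (poly_ring V) Gens"
    proof (rule ideal_sum)
      fix m assume m: "m \<in> Poly_Mapping.keys p - Low"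
      then have "Poly_Mapping.keys m \<subseteq> V" using p by (auto dest: poly_ringD)
      moreover then have "d < mdeg V m" using m unfolding Low_def by auto
      ultimately have "Poly_Mapping.single m (1::'k) \<in> ideal_gen (poly_ring V) Gens" using high by blast
      then have "const (Poly_Mapping.lookup p m) * Poly_Mapping.single m (1::'k) \<in> ideal_gen (poly_ring V) Gens"
        by (rule ideal_mult[OF poly_ring_const])
      then show "Poly_Mapping.single m (Poly_Mapping.lookup p m) \<in> ideal_gen (poly_ring V) Gens"
        by (simp add: const_mult_single)
    qed
    finally show "\<exists>c. p - (\<Sum>b\<in>B. const (c b) * b) \<in> ideal_gen (poly_ring V) Gens" by blast
  qed
  ultimately show ?thesis unfolding fin_dim_quot_def by blast
qed

definition evm :: "('v \<Rightarrow> 'k::field poly) \<Rightarrow> ('v \<Rightarrow>\<^sub>0 nat) \<Rightarrow> 'k poly" where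
  "evm y m = (\<Prod>w\<in>Poly_Mapping.keys m. y w ^ Poly_Mapping.lookup m w)"

definition evp :: "('v \<Rightarrow> 'k::field poly) \<Rightarrow> ('v, 'k) mpoly \<Rightarrow> 'k poly" where
  "evp y p = (\<Sum>m\<in>Poly_Mapping.keys p. smult (Poly_Mapping.lookup p m) (evm y m))"

lemma evm_superset: "finite K \<Longrightarrow> Poly_Mapping.keys m \<subseteq> K \<Longrightarrow> evm y m = (\<Prod>w\<in>K. y w ^ Poly_Mapping.lookup m w)"
  unfolding evm_def by (rule prod.mono_neutral_left) (auto simp: in_keys_iff)

lemma evm_add: "evm y (m1 + m2) = evm y m1 * evm y m2"
proof -
  let ?K = "Poly_Mapping.keys m1 \<union> Poly_Mapping.keys m2"
  have "evm y (m1 + m2) = (\<Prod>w\<in>?K. y w ^ Poly_Mapping.lookup (m1 + m2) w)"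
    using keys_add[of m1 m2] by (intro evm_superset) auto
  also have "\<dots> = (\<Prod>w\<in>?K. y w ^ Poly_Mapping.lookup m1 w) * (\<Prod>w\<in>?K. y w ^ Poly_Mapping.lookup m2 w)"
    unfolding lookup_add power_add prod.distrib ..
  also have "\<dots> = evm y m1 * evm y m2" by (subst (1 2) evm_superset[of ?K]) auto
  finally show ?thesis .
qed

lemma evm_zero[simp]: "evm y 0 = 1"
  unfolding evm_def by simp

lemma evp_superset: "finite K \<Longrightarrow> Poly_Mapping.keys p \<subseteq> K \<Longrightarrow> evp y p = (\<Sum>m\<in>K. smult (Poly_Mapping.lookup p m) (evm y m))"
  unfolding evp_def by (rule sum.mono_neutral_left) (auto simp: in_keys_iff)

lemma evp_add: "evp y (p + q) = evp y p + evp y q"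
proof -
  let ?K = "Poly_Mapping.keys p \<union> Poly_Mapping.keys q"
  have "evp y (p + q) = (\<Sum>m\<in>?K. smult (Poly_Mapping.lookup (p + q) m) (evm y m))"
    using keys_add[of p q] by (intro evp_superset) auto
  also have "\<dots> = (\<Sum>m\<in>?K. smult (Poly_Mapping.lookup p m) (evm y m)) + (\<Sum>m\<in>?K. smult (Poly_Mapping.lookup q m) (evm y m))"
    unfolding lookup_add smult_add_left sum.distrib ..
  also have "\<dots> = evp y p + evp y q" by (subst (1 2) evp_superset[of ?K]) auto
  finally show ?thesis .
qed

lemma evp_zero[simp]: "evp y 0 = 0"
  unfolding evp_def by simp

lemma evp_sum: "evp y (\<Sum>i\<in>A. f i) = (\<Sum>i\<in>A. evp y (f i))"
  by (induction A rule: infinite_finite_induct) (auto simp: evp_add)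

lemma evp_single: "evp y (Poly_Mapping.single m c) = smult c (evm y m)"
  unfolding evp_def by auto

lemma evp_mult: "evp y (p * q) = evp y p * evp y q"
proof -
  have "p * q = (\<Sum>m\<in>Poly_Mapping.keys p. Poly_Mapping.single m (Poly_Mapping.lookup p m)) * (\<Sum>m'\<in>Poly_Mapping.keys q. Poly_Mapping.single m' (Poly_Mapping.lookup q m'))"
    by (subst (1) poly_expand, subst (2) poly_expand) (rule refl)
  also have "\<dots> = (\<Sum>m\<in>Poly_Mapping.keys p. \<Sum>m'\<in>Poly_Mapping.keys q. Poly_Mapping.single (m + m') (Poly_Mapping.lookup p m * Poly_Mapping.lookup q m'))"
    unfolding sum_product mult_single ..
  finally have "evp y (p * q) = (\<Sum>m\<in>Poly_Mapping.keys p. \<Sum>m'\<in>Poly_Mapping.keys q. smult (Poly_Mapping.lookup p m) (evm y m) * smult (Poly_Mapping.lookup q m') (evm y m'))"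
    by (simp add: evp_sum evp_single evm_add mult.commute mult.left_commute)
  also have "\<dots> = evp y p * evp y q" unfolding evp_def sum_product ..
  finally show ?thesis .
qed

lemma evp_uminus: "evp y (- p) = - evp y p"
  using evp_add[of y p "- p"] by (simp add: add_eq_0_iff)

lemma evp_diff: "evp y (p - q) = evp y p - evp y q"
  using evp_add[of y p "- q"] evp_uminus[of y q] by simp

lemma evp_const: "evp y (const c) = [:c:]"
  unfolding const_def evp_single by simp

lemma evp_var: "evp y (var w) = y w"
  unfolding var_def evp_single evm_def by simp

lemma evp_prod: "evp y (\<Prod>i\<in>A. f i) = (\<Prod>i\<in>A. evp y (f i))"
  by (induction A rule: infinite_finite_induct) (auto simp: evp_mult evp_single simp flip: single_one)

lemma evp_power: "evp y (p ^ n) = evp y p ^ n"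
  by (induction n) (auto simp: evp_mult evp_single simp flip: single_one)

lemma evp_ideal:
  assumes "\<forall>g\<in>Gens. evp y g = 0" "x \<in> ideal_gen R Gens"
  shows "evp y x = 0"
proof -
  obtain A q where "x = (\<Sum>g\<in>A. q g * g)" "A \<subseteq> Gens"
    using assms(2) unfolding ideal_gen_def by blast
  then show ?thesis using assms(1) by (auto simp: evp_sum evp_mult intro!: sum.neutral)
qed

lemma null_vector:
  fixes a :: "nat \<Rightarrow> 'v \<Rightarrow> 'k::field"
  assumes finF: "finite F" and finI: "finite I" and lt: "card I < card F"
  shows "\<exists>v. (\<forall>u. u \<notin> F \<longrightarrow> v u = 0) \<and> (\<exists>w\<in>F. v w \<noteq> 0) \<and> (\<forall>i\<in>I. (\<Sum>u\<in>F. a i u * v u) = 0)"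
proof -
  define n where "n = card F"
  define m where "m = card I"
  obtain g where g: "bij_betw g {0..<n} F" using ex_bij_betw_nat_finite[OF finF] n_def by auto
  obtain h where h: "bij_betw h {0..<m} I" using ex_bij_betw_nat_finite[OF finI] m_def by auto
  have mn: "m < n" using lt m_def n_def by simp
  define A where "A = mat n n (\<lambda>(j,l). if j < m then a (h j) (g l) else 0)"
  have Ac: "A \<in> carrier_mat n n" unfolding A_def by simp
  have "det A = 0"
  proof -
    have "det A = (\<Sum>p\<in>{p. p permutes {0..<n}}. signof p * (\<Prod>j=0..<n. A $$ (j, p j)))"
      by (rule det_def'[OF Ac])
    also have "\<dots> = 0"
    proof (rule sum.neutral, rule ballI)
      fix p assume "p \<in> {p. p permutes {0..<n}}"
      then have pn: "p (n - 1) < n" using mn by (auto simp: permutes_in_image)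
      have "A $$ (n - 1, p (n - 1)) = 0" unfolding A_def using pn mn by simp
      moreover have "n - 1 \<in> {0..<n}" using mn by simp
      ultimately have "(\<Prod>j=0..<n. A $$ (j, p j)) = 0" by (intro prod_zero) auto
      then show "signof p * (\<Prod>j=0..<n. A $$ (j, p j)) = 0" by simp
    qed
    finally show ?thesis .
  qed
  then obtain vv where vv: "vv \<in> carrier_vec n" "vv \<noteq> 0\<^sub>v n" "A *\<^sub>v vv = 0\<^sub>v n"
    using det_0_iff_vec_prod_zero_field[OF Ac] by blast
  have dvv: "dim_vec vv = n" using vv(1) by simp
  obtain l0 where l0: "l0 < n" "vv $ l0 \<noteq> 0"
    using vv(2) dvv by (auto simp: vec_eq_iff)
  define v where "v u = (if u \<in> F then vv $ (inv_into {0..<n} g u) else 0)" for u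
  have gF: "\<And>l. l < n \<Longrightarrow> g l \<in> F" using g by (auto simp: bij_betw_def)
  have ginv: "\<And>l. l < n \<Longrightarrow> inv_into {0..<n} g (g l) = l" using g
    by (auto simp: bij_betw_def inv_into_f_f)
  have vg: "\<And>l. l < n \<Longrightarrow> v (g l) = vv $ l" unfolding v_def using gF ginv by auto
  have "\<forall>i\<in>I. (\<Sum>u\<in>F. a i u * v u) = 0"
  proof
    fix i assume i: "i \<in> I"
    then obtain j where j: "j < m" "h j = i" using h by (auto simp: bij_betw_def image_iff)
    have "(\<Sum>u\<in>F. a i u * v u) = (\<Sum>l\<in>{0..<n}. a i (g l) * v (g l))"
      using sum.reindex_bij_betw[OF g, of "\<lambda>u. a i u * v u"] by simp
    also have "\<dots> = (\<Sum>l\<in>{0..<n}. A $$ (j, l) * vv $ l)"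
      using vg j mn unfolding A_def by (intro sum.cong refl) auto
    also have "\<dots> = (A *\<^sub>v vv) $ j"
      using j mn Ac dvv by (simp add: scalar_prod_def A_def)
    also have "\<dots> = 0" using vv(3) j mn by simp
    finally show "(\<Sum>u\<in>F. a i u * v u) = 0" .
  qed
  moreover have "\<exists>w\<in>F. v w \<noteq> 0" using l0 vg gF by metis
  moreover have "\<forall>u. u \<notin> F \<longrightarrow> v u = 0" unfolding v_def by simp
  ultimately show ?thesis by blast
qed

lemma finite_vertices: "simplicial_complex \<Gamma> \<Longrightarrow> finite (vertices \<Gamma>)"
  unfolding simplicial_complex_def vertices_def by auto

lemma face_sub_vertices: "F \<in> \<Gamma> \<Longrightarrow> F \<subseteq> vertices \<Gamma>"
  unfolding vertices_def by auto

lemma forward: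
  fixes a :: "nat \<Rightarrow> 'v \<Rightarrow> 'k::field"
  assumes SC: "simplicial_complex \<Gamma>" and lsop: "is_lsop \<Gamma> d a"
    and sp: "\<forall>i<d. supp (vertices \<Gamma>) (a i) = S i" and F: "F \<in> \<Gamma>"
  shows "card F \<le> card {i. i < d \<and> S i \<inter> F \<noteq> {}}"
proof (rule ccontr)
  assume "\<not> ?thesis"
  then have lt: "card {i. i < d \<and> S i \<inter> F \<noteq> {}} < card F" by simp
  define V where "V = vertices \<Gamma>"
  have finV: "finite V" unfolding V_def by (rule finite_vertices[OF SC])
  have FV: "F \<subseteq> V" unfolding V_def by (rule face_sub_vertices[OF F])
  have finF: "finite F" using FV finV finite_subset by blast
  have finI: "finite {i. i < d \<and> S i \<inter> F \<noteq> {}}" by simp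
  obtain v :: "'v \<Rightarrow> 'k" where v0: "\<forall>u. u \<notin> F \<longrightarrow> v u = 0" and w0ex: "\<exists>w\<in>F. v w \<noteq> 0"
    and vI: "\<forall>i\<in>{i. i < d \<and> S i \<inter> F \<noteq> {}}. (\<Sum>u\<in>F. a i u * v u) = 0"
    using null_vector[OF finF finI lt, of a] by blast
  obtain w0 where w0: "w0 \<in> F" "v w0 \<noteq> 0" using w0ex by blast
  have zi: "(\<Sum>u\<in>F. a i u * v u) = 0" if i: "i < d" for i
  proof (cases "S i \<inter> F \<noteq> {}")
    case True then show ?thesis using vI i by blast
  next
    case False
    have "\<forall>u\<in>F. a i u = 0"
    proof
      fix u assume u: "u \<in> F"
      then have "u \<notin> S i" using False by blast
      then show "a i u = 0" using sp i u FV unfolding supp_def V_def by blast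
    qed
    then show ?thesis by simp
  qed
  define y where "y u = monom (v u) 1" for u
  let ?M = "{monom_set G | G. G \<subseteq> vertices \<Gamma> \<and> G \<notin> \<Gamma>}"
  let ?L = "{lin_form (vertices \<Gamma>) (a i) | i. i < d}"
  have gens0: "\<forall>g\<in>?M \<union> ?L. evp y g = 0"
  proof
    fix g assume "g \<in> ?M \<union> ?L"
    then consider (M) G where "g = monom_set G" "G \<subseteq> V" "G \<notin> \<Gamma>" | (L) i where "g = lin_form V (a i)" "i < d"
      unfolding V_def by blast
    then show "evp y g = 0"
    proof cases
      case M
      have "\<not> G \<subseteq> F"
      proof
        assume "G \<subseteq> F"
        then have "G \<in> \<Gamma>" using SC F unfolding simplicial_complex_def by blast
        then show False using M by blast
      qed
      then obtain u where u: "u \<in> G" "u \<notin> F" by blast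
      have "finite G" using M finV finite_subset by blast
      have "evp y g = (\<Prod>w\<in>G. y w)" unfolding M monom_set_def evp_prod evp_var ..
      also have "\<dots> = 0" using u v0 \<open>finite G\<close> unfolding y_def by (intro prod_zero) auto
      finally show ?thesis .
    next
      case L
      have "evp y g = (\<Sum>u\<in>V. monom (a i u * v u) 1)"
        unfolding L lin_form_def evp_sum evp_mult evp_const evp_var y_def
        by (intro sum.cong refl) (simp add: smult_monom)
      also have "\<dots> = monom (\<Sum>u\<in>V. a i u * v u) 1" by (simp add: monom_sum)
      also have "(\<Sum>u\<in>V. a i u * v u) = (\<Sum>u\<in>F. a i u * v u)"
        using FV finV v0 by (intro sum.mono_neutral_right) auto
      also have "\<dots> = 0" using zi L by simp
      finally show ?thesis by simp
    qed
  qed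
  obtain B where B: "finite B" "B \<subseteq> poly_ring V"
    and span: "\<forall>p\<in>poly_ring V. \<exists>c. p - (\<Sum>b\<in>B. const (c b) * b) \<in> ideal_gen (poly_ring V) (?M \<union> ?L)"
    using lsop unfolding is_lsop_def fin_dim_quot_def V_def by blast
  define N where "N = Suc (\<Sum>b\<in>B. degree (evp y b))"
  have degN: "degree (evp y b) < N" if "b \<in> B" for b
    using member_le_sum[of b B "\<lambda>b. degree (evp y b)"] that B(1) unfolding N_def by simp
  have "var w0 ^ N \<in> poly_ring V" using w0 FV by (intro poly_ring_power poly_ring_var) auto
  then obtain c where c: "var w0 ^ N - (\<Sum>b\<in>B. const (c b) * b) \<in> ideal_gen (poly_ring V) (?M \<union> ?L)"
    using span by blast
  have "evp y (var w0 ^ N - (\<Sum>b\<in>B. const (c b) * b)) = 0" by (rule evp_ideal[OF gens0 c])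
  then have eq: "y w0 ^ N = (\<Sum>b\<in>B. [:c b:] * evp y b)"
    by (simp add: evp_diff evp_power evp_var evp_sum evp_mult evp_const)
  have "coeff (y w0 ^ N) N = v w0 ^ N" unfolding y_def monom_power by simp
  moreover have "coeff (\<Sum>b\<in>B. [:c b:] * evp y b) N = 0"
    unfolding coeff_sum using degN by (intro sum.neutral) (simp add: coeff_eq_0)
  ultimately show False using eq w0 by simp
qed

lemma backward:
  fixes S :: "nat \<Rightarrow> 'v set" and \<Gamma> :: "'v set set"
  assumes inf: "infinite (UNIV :: 'k::field set)"
    and SC: "simplicial_complex \<Gamma>"
    and dm: "face_card_max \<Gamma> = d"
    and SV: "\<forall>i<d. S i \<subseteq> vertices \<Gamma>"
    and hc: "\<forall>F\<in>\<Gamma>. card {i. i < d \<and> S i \<inter> F \<noteq> {}} \<ge> card F"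
  shows "\<exists>a :: nat \<Rightarrow> 'v \<Rightarrow> 'k. is_lsop \<Gamma> d a \<and> (\<forall>i<d. supp (vertices \<Gamma>) (a i) = S i)"
proof -
  define V where "V = vertices \<Gamma>"
  have finV: "finite V" unfolding V_def by (rule finite_vertices[OF SC])
  have fin\<Gamma>: "finite \<Gamma>" using SC unfolding simplicial_complex_def by blast
  have \<Gamma>V: "\<forall>G\<in>\<Gamma>. G \<subseteq> V" unfolding V_def using face_sub_vertices by blast
  have hall: "\<forall>G\<in>\<Gamma>. \<forall>H\<subseteq>G. card H \<le> card {i. i < d \<and> S i \<inter> H \<noteq> {}}"
  proof (intro ballI allI impI)
    fix G H assume "G \<in> \<Gamma>" "H \<subseteq> G"
    then have "H \<in> \<Gamma>" using SC unfolding simplicial_complex_def by blast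
    then show "card H \<le> card {i. i < d \<and> S i \<inter> H \<noteq> {}}" using hc by blast
  qed
  obtain a :: "nat \<Rightarrow> 'v \<Rightarrow> 'k" where a0: "\<forall>i u. a i u \<noteq> 0 \<longleftrightarrow> u \<in> S i"
    and aspan: "\<forall>G\<in>\<Gamma>. \<forall>w\<in>G. \<exists>c. \<forall>u\<in>G. (\<Sum>i<d. c i * a i u) = (if u = w then 1 else 0)"
    using generic_choice[OF inf finV fin\<Gamma> \<Gamma>V hall] by blast
  have suppa: "\<forall>i<d. supp (vertices \<Gamma>) (a i) = S i"
    using a0 SV unfolding supp_def by auto
  let ?M = "{monom_set F | F. F \<subseteq> vertices \<Gamma> \<and> F \<notin> \<Gamma>}"
  let ?L = "{lin_form (vertices \<Gamma>) (a i) | i. i < d}"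
  have fc: "\<forall>F\<in>\<Gamma>. card F \<le> d"
    using dm fin\<Gamma> unfolding face_card_max_def by auto
  have th: "\<forall>i<d. lin_form V (a i) \<in> ideal_gen (poly_ring V) (?M \<union> ?L)"
    unfolding V_def by (auto intro: ideal_gen_in)
  have lin: "\<forall>G\<in>\<Gamma>. G \<subseteq> V \<longrightarrow> (\<forall>w\<in>G. \<exists>b. var w + (\<Sum>u\<in>V-G. const (b u) * var u) \<in> ideal_gen (poly_ring V) (?M \<union> ?L))"
  proof (intro ballI impI)
    fix G w assume G: "G \<in> \<Gamma>" and GV: "G \<subseteq> V" and w: "w \<in> G"
    obtain c where c: "\<forall>u\<in>G. (\<Sum>i<d. c i * a i u) = (if u = w then 1 else 0)" using aspan G w by blast
    show "\<exists>b. var w + (\<Sum>u\<in>V-G. const (b u) * var u) \<in> ideal_gen (poly_ring V) (?M \<union> ?L)"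
    proof (rule exI[of _ "\<lambda>u. \<Sum>i<d. c i * a i u"])
      show "var w + (\<Sum>u\<in>V-G. const (\<Sum>i<d. c i * a i u) * var u) \<in> ideal_gen (poly_ring V) (?M \<union> ?L)"
        by (rule lin_comb_in_ideal[OF finV GV w th c])
    qed
  qed
  have mon: "\<forall>F. F \<subseteq> V \<and> F \<notin> \<Gamma> \<longrightarrow> monom_set F \<in> ideal_gen (poly_ring V) (?M \<union> ?L)"
    unfolding V_def by (auto intro: ideal_gen_in)
  have "\<forall>m. Poly_Mapping.keys m \<subseteq> V \<and> d < mdeg V m \<longrightarrow> Poly_Mapping.single m (1::'k) \<in> ideal_gen (poly_ring V) (?M \<union> ?L)"
    using high_monomials[OF finV fc lin mon] by blast
  then have "fin_dim_quot (poly_ring V) (ideal_gen (poly_ring V) (?M \<union> ?L))"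
    by (rule fin_dim_from_high[OF finV])
  then have "is_lsop \<Gamma> d a" unfolding is_lsop_def V_def .
  then show ?thesis using suppa by blast
qed

theorem lemma2p2:
  fixes \<Gamma> :: "'v set set" and d :: nat and S :: "nat \<Rightarrow> 'v set"
  assumes "infinite (UNIV :: 'k::field set)"
    and "simplicial_complex \<Gamma>"
    and "face_card_max \<Gamma> = d"
    and "\<forall>i<d. S i \<subseteq> vertices \<Gamma>"
  shows "(\<exists>a :: nat \<Rightarrow> 'v \<Rightarrow> 'k. is_lsop \<Gamma> d a \<and> (\<forall>i<d. supp (vertices \<Gamma>) (a i) = S i))
     \<longleftrightarrow> (\<forall>F\<in>\<Gamma>. card {i. i < d \<and> S i \<inter> F \<noteq> {}} \<ge> card F)"
proof
  assume "\<exists>a :: nat \<Rightarrow> 'v \<Rightarrow> 'k. is_lsop \<Gamma> d a \<and> (\<forall>i<d. supp (vertices \<Gamma>) (a i) = S i)"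
  then obtain a :: "nat \<Rightarrow> 'v \<Rightarrow> 'k" where "is_lsop \<Gamma> d a" "\<forall>i<d. supp (vertices \<Gamma>) (a i) = S i" by blast
  then show "\<forall>F\<in>\<Gamma>. card {i. i < d \<and> S i \<inter> F \<noteq> {}} \<ge> card F"
    using forward[OF assms(2)] by blast
next
  assume "\<forall>F\<in>\<Gamma>. card {i. i < d \<and> S i \<inter> F \<noteq> {}} \<ge> card F"
  then show "\<exists>a :: nat \<Rightarrow> 'v \<Rightarrow> 'k. is_lsop \<Gamma> d a \<and> (\<forall>i<d. supp (vertices \<Gamma>) (a i) = S i)"
    using backward[OF assms] by blast
qed

end
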